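(* Let $n\geqslant 3$ and $N=2^n-1$. Let $$\mathcal{W}_n=\Big\{(x_1,\dots,x_n,y_1,\dots,y_n)\in\mathbb{Z}^{2n}:\ y_1\cdots y_n\neq 0,\ \sum_{i=1}^n x_i\prod_{j\neq i}y_j=0\Big\}$$ and let $\mathcal{A}_n$ be the set of $(\mathbf{x}';(z_h)_{1\leqslant h\leqslant N})\in\mathbb{Z}^n\times(\mathbb{Z}\smallsetminus\{0\})^{N}$ such that $(z_h)$ is reduced, $z_h>0$ whenever $s(h)\geqslant 2$, and $$\sum_{j=1}^n\Big(\prod_{1\leqslant h\leqslant N}z_h^{1-\varepsilon_j(h)}\Big)z_{2^{j-1}}x'_j=0.$$ Then the map $$(\mathbf{x}';(z_h))\longmapsto\Big(z_1x'_1,z_2x'_2,\dots,z_{2^{n-1}}x'_n,\ \prod_{h}z_h^{\varepsilon_1(h)},\dots,\prod_h z_h^{\varepsilon_n(h)}\Big)$$ is a bijection from $\mathcal{A}_n$ onto $\mathcal{W}_n$.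
   Context: For $h\in\{1,\dots,N\}$ write $h=\sum_j\varepsilon_j(h)2^{j-1}$ with $\varepsilon_j(h)\in\{0,1\}$ and $s(h)=\sum_j\varepsilon_j(h)$; $h\preceq\ell$ means $\varepsilon_j(h)\leqslant\varepsilon_j(\ell)$ for all $j$. An $N$-tuple of nonzero integers $(z_h)$ is reduced if $\gcd(z_h,z_\ell)=1$ whenever $h,\ell$ are incomparable for $\preceq$. Note $z_{2^{j-1}}$ is the entry with index $h=2^{j-1}$. *)

theory Defs
  imports Main "HOL-Library.FuncSet"
begin

definition eps :: "nat \<Rightarrow> nat \<Rightarrow> nat" where
  "eps j h = (h div 2 ^ (j - 1)) mod 2"

definition digit_sum :: "nat \<Rightarrow> nat \<Rightarrow> nat" where
  "digit_sum n h = (\<Sum>j=1..n. eps j h)"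

definition preceq :: "nat \<Rightarrow> nat \<Rightarrow> bool" where
  "preceq h l \<longleftrightarrow> (\<forall>j\<ge>1. eps j h \<le> eps j l)"

definition reduced :: "nat \<Rightarrow> (nat \<Rightarrow> int) \<Rightarrow> bool" where
  "reduced N z \<longleftrightarrow> (\<forall>h\<in>{1..N}. \<forall>l\<in>{1..N}.
      \<not> preceq h l \<and> \<not> preceq l h \<longrightarrow> gcd (z h) (z l) = 1)"

text \<open>Tuples indexed by {1..n} are extensional functions.\<close>
definition W_set :: "nat \<Rightarrow> ((nat \<Rightarrow> int) \<times> (nat \<Rightarrow> int)) set" where
  "W_set n = {(x, y). x \<in> {1..n} \<rightarrow>\<^sub>E UNIV \<and> y \<in> {1..n} \<rightarrow>\<^sub>E UNIV \<and>
      (\<Prod>i=1..n. y i) \<noteq> 0 \<and>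
      (\<Sum>i=1..n. x i * (\<Prod>j\<in>{1..n} - {i}. y j)) = 0}"

definition A_set :: "nat \<Rightarrow> ((nat \<Rightarrow> int) \<times> (nat \<Rightarrow> int)) set" where
  "A_set n = {(x', z). x' \<in> {1..n} \<rightarrow>\<^sub>E UNIV \<and>
      z \<in> {1..2^n - 1} \<rightarrow>\<^sub>E (UNIV - {0}) \<and>
      reduced (2^n - 1) z \<and>
      (\<forall>h\<in>{1..2^n - 1}. digit_sum n h \<ge> 2 \<longrightarrow> z h > 0) \<and>
      (\<Sum>j=1..n. (\<Prod>h=1..2^n - 1. z h ^ (1 - eps j h)) * z (2^(j-1)) * x' j) = 0}"

definition the_map :: "nat \<Rightarrow> (nat \<Rightarrow> int) \<times> (nat \<Rightarrow> int) \<Rightarrow> (nat \<Rightarrow> int) \<times> (nat \<Rightarrow> int)" where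
  "the_map n = (\<lambda>(x', z).
     ((\<lambda>j\<in>{1..n}. z (2^(j-1)) * x' j),
      (\<lambda>j\<in>{1..n}. \<Prod>h=1..2^n - 1. z h ^ eps j h)))"

end

theory Submission
  imports Defs "HOL-Computational_Algebra.Primes"
begin


lemma sum_if_filter: "finite A \<Longrightarrow> (\<Sum>x\<in>A. if P x then f x else 0) = (\<Sum>x\<in>{x\<in>A. P x}. f x)"
  by (simp add: sum.inter_filter)

lemma card_filter_sum: "finite A \<Longrightarrow> card {x\<in>A. P x} = (\<Sum>x\<in>A. if P x then 1 else 0)"
  by (simp add: sum_if_filter)

lemma eps_bit: "eps j h = (if bit h (j-1) then 1 else 0)"
  unfolding eps_def bit_nat_def by (auto simp: odd_iff_mod_2_eq_one even_iff_mod_2_eq_zero)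

lemma eps_le1: "eps j h \<le> 1"
  by (simp add: eps_bit)

lemma eps_cases: "eps j h = 0 \<or> eps j h = 1"
  by (simp add: eps_bit)

lemma eps_high: "h < 2^n \<Longrightarrow> n < j \<Longrightarrow> eps j h = 0"
proof -
  assume a: "h < 2^n" "n < j"
  have "(2::nat)^n \<le> 2^(j-1)" using a(2) by (intro power_increasing) auto
  hence "h div 2^(j-1) = 0" using a(1) by (intro div_less) linarith
  thus ?thesis by (simp add: eps_def)
qed

lemma eps_inj: "(\<And>j. j \<ge> 1 \<Longrightarrow> eps j h = eps j l) \<Longrightarrow> h = l"
proof (rule bit_eqI)
  fix k assume "\<And>j. j \<ge> 1 \<Longrightarrow> eps j h = eps j l"
  from this[of "Suc k"] show "bit h k = bit l k" by (simp add: eps_bit split: if_splits)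
qed

lemma eps_zero [simp]: "eps j 0 = 0"
  by (simp add: eps_def)

lemma preceq_le: "preceq g l \<Longrightarrow> g \<le> l"
proof -
  assume p: "preceq g l"
  have "and g l = g"
  proof (rule bit_eqI)
    fix k
    have "eps (Suc k) g \<le> eps (Suc k) l" using p by (simp add: preceq_def)
    then show "bit (and g l) k = bit g k" by (auto simp: bit_and_iff eps_bit split: if_splits)
  qed
  moreover have "int (and g l) \<le> int l"
    by (simp add: of_nat_and_eq)
  ultimately show ?thesis by linarith
qed

lemma preceq_refl: "preceq h h" by (simp add: preceq_def)

lemma preceq_antisym: "preceq h l \<Longrightarrow> preceq l h \<Longrightarrow> h = l"
  using preceq_le by (meson le_antisym)

lemma in_N_less: "h \<in> {1..2^n-1} \<Longrightarrow> h < (2::nat)^n"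
proof -
  assume "h \<in> {1..2^n-1}"
  moreover have "(1::nat) \<le> 2^n" by simp
  ultimately show ?thesis by auto
qed

lemma nonempty_bit:
  assumes "h \<in> {1..2^n-1}" shows "\<exists>j\<in>{1..n}. eps j h = 1"
proof (rule ccontr)
  assume "\<not> ?thesis"
  hence "\<And>j. j \<ge> 1 \<Longrightarrow> eps j h = eps j 0"
    using eps_high[of h n] eps_cases[of _ h] assms by (fastforce simp: not_le)
  hence "h = 0" by (rule eps_inj)
  with assms show False by simp
qed

lemma digit_sum_ge1:
  assumes "h \<in> {1..2^n-1}" shows "digit_sum n h \<ge> 1"
proof -
  obtain j where j: "j \<in> {1..n}" "eps j h = 1" using nonempty_bit[OF assms] by blast
  have "eps j h \<le> (\<Sum>j=1..n. eps j h)" by (rule member_le_sum) (use j in auto)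
  thus ?thesis using j by (simp add: digit_sum_def)
qed

lemma pow_in: "j \<in> {1..n} \<Longrightarrow> (2::nat)^(j-1) \<in> {1..2^n-1}"
proof -
  assume j: "j \<in> {1..n}"
  have "(2::nat)^(j-1) < 2^n" using j by (intro power_strict_increasing) auto
  then have "(2::nat)^(j-1) \<le> 2^n - 1" by linarith
  then show ?thesis by simp
qed

lemma eps_pow: "i \<ge> 1 \<Longrightarrow> j \<ge> 1 \<Longrightarrow> eps i (2^(j-1)) = (if i = j then 1 else 0)"
  apply (subst eps_bit)
  apply (simp only: bit_exp_iff possible_bit_nat)
  by auto

lemma digit_sum_pow: "j \<in> {1..n} \<Longrightarrow> digit_sum n (2^(j-1)) = 1"
proof -
  assume j: "j \<in> {1..n}"
  have "digit_sum n (2^(j-1)) = (\<Sum>i=1..n. if i = j then 1 else 0)"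
    unfolding digit_sum_def by (rule sum.cong) (use j eps_pow[of _ j] in auto)
  also have "\<dots> = 1" using j by (simp add: sum.delta)
  finally show ?thesis .
qed

lemma digit_sum_ge2:
  assumes h: "h \<in> {1..2^n-1}" and j: "j \<in> {1..n}" "eps j h = 1" and ne: "h \<noteq> 2^(j-1)"
  shows "digit_sum n h \<ge> 2"
proof -
  have "\<exists>i. i \<ge> 1 \<and> i \<noteq> j \<and> eps i h = 1"
  proof (rule ccontr)
    assume "\<not> ?thesis"
    hence "\<And>i. i \<ge> 1 \<Longrightarrow> eps i h = eps i (2^(j-1))"
      using j eps_cases[of _ h] eps_pow[of _ j] by auto
    hence "h = 2^(j-1)" by (rule eps_inj)
    with ne show False ..
  qed
  then obtain i where i: "i \<ge> 1" "i \<noteq> j" "eps i h = 1" by blast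
  have "i \<le> n" using eps_high[of h n i] in_N_less[OF h] i by (cases "i \<le> n") auto
  have "(\<Sum>k\<in>{i,j}. eps k h) \<le> (\<Sum>k=1..n. eps k h)"
    by (rule sum_mono2) (use i j \<open>i \<le> n\<close> in auto)
  thus ?thesis using i j by (simp add: digit_sum_def)
qed



definition vchain :: "nat \<Rightarrow> (nat \<Rightarrow> nat) \<Rightarrow> bool" where
  "vchain n a \<longleftrightarrow> (\<forall>h\<in>{1..2^n-1}. \<forall>l\<in>{1..2^n-1}. a h > 0 \<longrightarrow> a l > 0 \<longrightarrow> preceq h l \<or> preceq l h)"

lemma upper_sum:
  assumes ch: "vchain n a" and rep: "\<And>j. j\<in>{1..n} \<Longrightarrow> v j = (\<Sum>l=1..2^n-1. eps j l * a l)"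
    and h: "h \<in> {1..2^n-1}"
  shows "\<And>j. j\<in>{1..n} \<Longrightarrow> eps j h = 1 \<Longrightarrow> (\<Sum>l\<in>{l\<in>{1..2^n-1}. preceq h l}. a l) \<le> v j"
    and "\<exists>j\<in>{1..n}. eps j h = 1 \<and> v j = (\<Sum>l\<in>{l\<in>{1..2^n-1}. preceq h l}. a l)"
proof -
  let ?S = "{l\<in>{1..2^n-1}. preceq h l}"
  have pe: "eps j l = 1" if "preceq h l" "eps j h = 1" "j \<in> {1..n}" for j l
  proof -
    from that(1) have "\<forall>j\<ge>1. eps j h \<le> eps j l" by (simp add: preceq_def)
    hence "eps j h \<le> eps j l" using that(3) by auto
    thus ?thesis using that(2) eps_le1[of j l] by simp
  qed
  {
    fix j assume j: "j\<in>{1..n}" "eps j h = 1"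
    have "(\<Sum>l\<in>?S. a l) = (\<Sum>l\<in>?S. eps j l * a l)"
      by (rule sum.cong) (use pe j in auto)
    also have "\<dots> \<le> (\<Sum>l=1..2^n-1. eps j l * a l)"
      by (rule sum_mono2) auto
    finally show "(\<Sum>l\<in>?S. a l) \<le> v j" using rep j by simp
  }
  have claim: "\<exists>j\<in>{1..n}. eps j h = 1 \<and> (\<forall>l\<in>{1..2^n-1}. a l > 0 \<longrightarrow> eps j l = 1 \<longrightarrow> preceq h l)"
  proof (cases "{l\<in>{1..2^n-1}. a l > 0 \<and> \<not> preceq h l} = {}")
    case True
    then show ?thesis using nonempty_bit[OF h] by blast
  next
    case False
    define G where "G = {l\<in>{1..2^n-1}. a l > 0 \<and> \<not> preceq h l}"
    define g where "g = Max G"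
    have fG: "finite G" unfolding G_def by auto
    have gG: "g \<in> G" unfolding g_def using False fG Max_in G_def by blast
    have gmax: "l \<le> g" if "l \<in> G" for l unfolding g_def using fG that by simp
    from gG have "\<not> preceq h g" by (simp add: G_def)
    then obtain j where j: "j \<ge> 1" "\<not> eps j h \<le> eps j g" by (auto simp: preceq_def)
    hence j1: "eps j h = 1" "eps j g = 0" using eps_cases[of j h] eps_cases[of j g] by auto
    have jn: "j \<le> n" using eps_high[of h n j] in_N_less[OF h] j1 by (cases "j \<le> n") auto
    have "\<forall>l\<in>{1..2^n-1}. a l > 0 \<longrightarrow> eps j l = 1 \<longrightarrow> preceq h l"
    proof (intro ballI impI)
      fix l :: nat assume l: "l \<in> {1..2^n-1}" "a l > 0" "eps j l = 1"
      show "preceq h l"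
      proof (rule ccontr)
        assume np: "\<not> preceq h l"
        hence lG: "l \<in> G" using l by (simp add: G_def)
        hence "l \<le> g" by (rule gmax)
        have "a g > 0" "g \<in> {1..2^n-1}" using gG by (auto simp: G_def)
        hence "preceq l g \<or> preceq g l" using ch l unfolding vchain_def by blast
        thus False
        proof
          assume "preceq l g" hence "eps j l \<le> eps j g" using j by (simp add: preceq_def)
          thus False using l j1 by simp
        next
          assume "preceq g l" hence "g \<le> l" by (rule preceq_le)
          hence "g = l" using \<open>l \<le> g\<close> by simp
          thus False using l j1 by simp
        qed
      qed
    qed
    then show ?thesis using j1 j jn by auto
  qed
  then obtain j where j: "j\<in>{1..n}" "eps j h = 1"
    and jl: "\<And>l. l\<in>{1..2^n-1} \<Longrightarrow> a l > 0 \<Longrightarrow> eps j l = 1 \<Longrightarrow> preceq h l" by blast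
  have "v j = (\<Sum>l=1..2^n-1. eps j l * a l)" using rep j by simp
  also have "\<dots> = (\<Sum>l=1..2^n-1. if preceq h l then a l else 0)"
  proof (rule sum.cong)
    fix l :: nat assume l: "l \<in> {1..2^n-1}"
    show "eps j l * a l = (if preceq h l then a l else 0)"
    proof (cases "preceq h l")
      case True then show ?thesis using pe j by simp
    next
      case False
      then have "a l = 0 \<or> eps j l \<noteq> 1" using jl l by blast
      then show ?thesis using False eps_cases[of j l] by auto
    qed
  qed simp
  also have "\<dots> = (\<Sum>l\<in>{l\<in>{1..2^n-1}. preceq h l}. a l)"
    by (rule sum_if_filter) simp
  finally show "\<exists>j\<in>{1..n}. eps j h = 1 \<and> v j = (\<Sum>l\<in>{l\<in>{1..2^n-1}. preceq h l}. a l)"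
    using j by blast
qed

lemma upper_sum_eq:
  assumes "vchain n a" "vchain n b"
    and "\<And>j. j\<in>{1..n} \<Longrightarrow> v j = (\<Sum>l=1..2^n-1. eps j l * a l)"
    and "\<And>j. j\<in>{1..n} \<Longrightarrow> v j = (\<Sum>l=1..2^n-1. eps j l * b l)"
    and h: "h \<in> {1..2^n-1}"
  shows "(\<Sum>l\<in>{l\<in>{1..2^n-1}. preceq h l}. a l) = (\<Sum>l\<in>{l\<in>{1..2^n-1}. preceq h l}. b l)"
proof -
  obtain ja where "ja\<in>{1..n}" "eps ja h = 1" "v ja = (\<Sum>l\<in>{l\<in>{1..2^n-1}. preceq h l}. a l)"
    using upper_sum(2)[OF assms(1,3) h] by blast
  moreover obtain jb where "jb\<in>{1..n}" "eps jb h = 1" "v jb = (\<Sum>l\<in>{l\<in>{1..2^n-1}. preceq h l}. b l)"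
    using upper_sum(2)[OF assms(2,4) h] by blast
  moreover note u1 = upper_sum(1)[OF assms(1,3) h] and u2 = upper_sum(1)[OF assms(2,4) h]
  ultimately show ?thesis
    by (metis le_antisym)
qed

lemma upper_inv:
  fixes N :: nat and a b :: "nat \<Rightarrow> nat"
  assumes "\<And>h. h\<in>{1..N} \<Longrightarrow> (\<Sum>l\<in>{l\<in>{1..N}. preceq h l}. a l) = (\<Sum>l\<in>{l\<in>{1..N}. preceq h l}. b l)"
  shows "h\<in>{1..N} \<Longrightarrow> a h = b h"
proof (induction "N - h" arbitrary: h rule: less_induct)
  case less
  let ?S' = "{l\<in>{1..N}. preceq h l \<and> l \<noteq> h}"
  have S: "{l\<in>{1..N}. preceq h l} = insert h ?S'" using less.prems preceq_refl by auto
  have eq: "(\<Sum>l\<in>?S'. a l) = (\<Sum>l\<in>?S'. b l)"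
  proof (rule sum.cong)
    fix l assume l: "l \<in> ?S'"
    hence "h < l" using preceq_le by force
    hence "N - l < N - h" using l by auto
    thus "a l = b l" using less.hyps l by auto
  qed simp
  have "a h + (\<Sum>l\<in>?S'. a l) = b h + (\<Sum>l\<in>?S'. b l)"
    using assms[OF less.prems] unfolding S by (simp add: sum.insert)
  thus ?case using eq by linarith
qed

lemma chain_unique:
  assumes "vchain n a" "vchain n b"
    and "\<And>j. j\<in>{1..n} \<Longrightarrow> v j = (\<Sum>l=1..2^n-1. eps j l * a l)"
    and "\<And>j. j\<in>{1..n} \<Longrightarrow> v j = (\<Sum>l=1..2^n-1. eps j l * b l)"
    and h: "h \<in> {1..2^n-1}"
  shows "a h = b h"
  using upper_inv[of "2^n-1" a b h] upper_sum_eq[OF assms(1-4)] h by blast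


definition lev :: "nat \<Rightarrow> (nat \<Rightarrow> nat) \<Rightarrow> nat \<Rightarrow> nat" where
  "lev n v t = horner_sum of_bool 2 (map (\<lambda>i. t \<le> v (Suc i)) [0..<n])"

lemma eps_lev: "j \<in> {1..n} \<Longrightarrow> eps j (lev n v t) = (if t \<le> v j then 1 else 0)"
  unfolding lev_def eps_bit by (auto simp: bit_horner_sum_bit_iff)

lemma lev_less: "lev n v t < 2^n"
  unfolding lev_def using horner_sum_bound[of "map (\<lambda>i. t \<le> v (Suc i)) [0..<n]"] by simp

lemma eps_lev_high: "n < j \<Longrightarrow> eps j (lev n v t) = 0"
  using eps_high[OF lev_less] by blast

definition Aq :: "nat \<Rightarrow> (nat \<Rightarrow> nat) \<Rightarrow> nat \<Rightarrow> nat" where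
  "Aq n v h = card {t\<in>{1..(\<Sum>j=1..n. v j)}. lev n v t = h}"

lemma Aq_rep:
  assumes j: "j \<in> {1..n}"
  shows "(\<Sum>h=1..2^n-1. eps j h * Aq n v h) = v j"
proof -
  define T where "T = (\<Sum>j=1..n. v j)"
  have vT: "v j \<le> T" unfolding T_def by (rule member_le_sum) (use j in auto)
  have "(\<Sum>h=1..2^n-1. eps j h * Aq n v h)
      = (\<Sum>h=1..2^n-1. \<Sum>t\<in>{1..T}. if lev n v t = h then eps j h else 0)"
  proof (rule sum.cong)
    fix h
    show "eps j h * Aq n v h = (\<Sum>t\<in>{1..T}. if lev n v t = h then eps j h else 0)"
      unfolding Aq_def T_def[symmetric] card_filter_sum[OF finite_atLeastAtMost] sum_distrib_left
      by (rule sum.cong) auto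
  qed simp
  also have "\<dots> = (\<Sum>t\<in>{1..T}. \<Sum>h=1..2^n-1. if lev n v t = h then eps j h else 0)"
    by (rule sum.swap)
  also have "\<dots> = (\<Sum>t\<in>{1..T}. if lev n v t \<in> {1..2^n-1} then eps j (lev n v t) else 0)"
    by (simp add: sum.delta')
  also have "\<dots> = (\<Sum>t\<in>{1..T}. if t \<le> v j then 1 else 0)"
  proof (rule sum.cong)
    fix t assume "t \<in> {1..T}"
    show "(if lev n v t \<in> {1..2^n-1} then eps j (lev n v t) else 0) = (if t \<le> v j then 1 else 0)"
    proof (cases "t \<le> v j")
      case True
      hence e: "eps j (lev n v t) = 1" using eps_lev[OF j] by simp
      hence "lev n v t \<noteq> 0" by (metis eps_zero zero_neq_one)
      moreover have "lev n v t \<le> 2^n - 1" using lev_less[of n v t] by linarith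
      ultimately show ?thesis using e True by simp
    next
      case False
      thus ?thesis using eps_lev[OF j] by simp
    qed
  qed simp
  also have "\<dots> = card {t\<in>{1..T}. t \<le> v j}"
    by (rule card_filter_sum[symmetric]) simp
  also have "{t\<in>{1..T}. t \<le> v j} = {1..v j}" using vT by auto
  finally show ?thesis by simp
qed

lemma Aq_pos: "Aq n v h > 0 \<Longrightarrow> \<exists>t. lev n v t = h"
  unfolding Aq_def card_gt_0_iff by auto

lemma lev_mono: "t \<le> t' \<Longrightarrow> preceq (lev n v t') (lev n v t)"
  unfolding preceq_def
proof (intro allI impI)
  fix k :: nat assume tt: "t \<le> t'" and k: "1 \<le> k"
  show "eps k (lev n v t') \<le> eps k (lev n v t)"
  proof (cases "k \<le> n")
    case True
    then show ?thesis using eps_lev[of k n v] k tt by auto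
  next
    case False
    then show ?thesis using eps_lev_high[of n k v t'] by simp
  qed
qed

lemma Aq_chain: "vchain n (Aq n v)"
  unfolding vchain_def
proof (intro ballI impI)
  fix h l assume "Aq n v h > 0" "Aq n v l > 0"
  then obtain t t' where "lev n v t = h" "lev n v t' = l" using Aq_pos by blast
  then show "preceq h l \<or> preceq l h" using lev_mono[of t t' n v] lev_mono[of t' t n v]
    by (cases "t \<le> t'") auto
qed

lemma Aq_single:
  assumes "j \<in> {1..n}" "i \<in> {1..n}" "i \<noteq> j"
  shows "Aq n v (2^(j-1)) \<le> v j - v i"
proof -
  have "{t\<in>{1..(\<Sum>j=1..n. v j)}. lev n v t = 2^(j-1)} \<subseteq> {Suc (v i)..v j}"
  proof
    fix t assume t: "t \<in> {t\<in>{1..(\<Sum>j=1..n. v j)}. lev n v t = 2^(j-1)}"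
    have lt: "lev n v t = 2^(j-1)" using t by simp
    have "eps j (2^(j-1)) = 1" "eps i (2^(j-1)) = 0"
      using eps_pow[of j j] eps_pow[of i j] assms by auto
    hence "eps j (lev n v t) = 1" "eps i (lev n v t) = 0" unfolding lt by auto
    hence "t \<le> v j" "\<not> t \<le> v i" unfolding eps_lev[OF assms(1)] eps_lev[OF assms(2)]
      by (simp_all split: if_splits)
    thus "t \<in> {Suc (v i)..v j}" by simp
  qed
  hence "Aq n v (2^(j-1)) \<le> card {Suc (v i)..v j}" unfolding Aq_def by (intro card_mono) auto
  thus ?thesis by simp
qed



lemma normalize_int_abs: "normalize (x::int) = \<bar>x\<bar>"
  by simp

definition Y :: "nat \<Rightarrow> (nat \<Rightarrow> int) \<Rightarrow> nat \<Rightarrow> int" where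
  "Y n z j = (\<Prod>h=1..2^n-1. z h ^ eps j h)"

lemma Y_nz: "(\<And>h. h \<in> {1..2^n-1} \<Longrightarrow> z h \<noteq> 0) \<Longrightarrow> Y n z j \<noteq> 0"
  unfolding Y_def by (simp add: prod_zero_iff)

lemma mult_Y:
  assumes q: "prime q" and nz: "\<And>h. h \<in> {1..2^n-1} \<Longrightarrow> z h \<noteq> 0"
  shows "multiplicity q (Y n z j) = (\<Sum>h=1..2^n-1. eps j h * multiplicity q (z h))"
  unfolding Y_def
proof -
  have "multiplicity q (\<Prod>h=1..2^n-1. z h ^ eps j h) = (\<Sum>h=1..2^n-1. multiplicity q (z h ^ eps j h))"
    by (rule prime_elem_multiplicity_prod_distrib) (use q nz in auto)
  also have "\<dots> = (\<Sum>h=1..2^n-1. eps j h * multiplicity q (z h))"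
    by (rule sum.cong) (use q nz in \<open>auto simp: prime_elem_multiplicity_power_distrib\<close>)
  finally show "multiplicity q (\<Prod>h=1..2^n-1. z h ^ eps j h) = (\<Sum>h=1..2^n-1. eps j h * multiplicity q (z h))" .
qed

lemma sgn_Y:
  assumes nz: "\<And>h. h \<in> {1..2^n-1} \<Longrightarrow> z h \<noteq> 0"
    and pos: "\<And>h. h \<in> {1..2^n-1} \<Longrightarrow> digit_sum n h \<ge> 2 \<Longrightarrow> z h > 0"
    and j: "j \<in> {1..n}"
  shows "sgn (Y n z j) = sgn (z (2^(j-1)))"
proof -
  let ?p = "(2::nat)^(j-1)"
  have pin: "?p \<in> {1..2^n-1}" using pow_in[OF j] .
  have ep: "eps j ?p = 1" using eps_pow[of j j] j by simp
  have "Y n z j = z ?p ^ eps j ?p * (\<Prod>h\<in>{1..2^n-1} - {?p}. z h ^ eps j h)"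
    unfolding Y_def by (rule prod.remove) (use pin in auto)
  also have "\<dots> = z ?p * (\<Prod>h\<in>{1..2^n-1} - {?p}. z h ^ eps j h)" using ep by simp
  finally have Yeq: "Y n z j = z ?p * (\<Prod>h\<in>{1..2^n-1} - {?p}. z h ^ eps j h)" .
  have "(\<Prod>h\<in>{1..2^n-1} - {?p}. z h ^ eps j h) > 0"
  proof (rule prod_pos)
    fix h assume h: "h \<in> {1..2^n-1} - {?p}"
    show "z h ^ eps j h > 0"
    proof (cases "eps j h = 1")
      case True
      hence "digit_sum n h \<ge> 2" using digit_sum_ge2[of h n j] h j by auto
      hence "z h > 0" using pos h by auto
      thus ?thesis by simp
    next
      case False
      hence "eps j h = 0" using eps_cases[of j h] by auto
      thus ?thesis by simp
    qed
  qed
  thus ?thesis unfolding Yeq by (simp add: sgn_mult)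
qed

lemma chain_of_reduced:
  assumes red: "reduced (2^n-1) z" and nz: "\<And>h. h \<in> {1..2^n-1} \<Longrightarrow> z h \<noteq> 0" and q: "prime q"
  shows "vchain n (\<lambda>h. multiplicity q (z h))"
  unfolding vchain_def
proof (intro ballI impI)
  fix h l assume h: "h \<in> {1..2^n-1}" and l: "l \<in> {1..2^n-1}"
    and a: "multiplicity q (z h) > 0" "multiplicity q (z l) > 0"
  have d: "q dvd z h" "q dvd z l" using a multiplicity_dvd'[of 1 q] by auto
  show "preceq h l \<or> preceq l h"
  proof (rule ccontr)
    assume nc: "\<not> ?thesis"
    from red have R: "\<forall>h\<in>{1..2^n-1}. \<forall>l\<in>{1..2^n-1}. \<not> preceq h l \<and> \<not> preceq l h \<longrightarrow> gcd (z h) (z l) = 1"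
      unfolding reduced_def .
    have "gcd (z h) (z l) = 1" using R h l nc by simp
    moreover have "q dvd gcd (z h) (z l)" using d by (rule gcd_greatest)
    ultimately have "is_unit q" by simp
    thus False using q by (simp add: not_prime_unit)
  qed
qed

lemma Y_prod_diff:
  assumes nz: "\<And>h. h \<in> {1..2^n-1} \<Longrightarrow> z h \<noteq> 0" and i: "i \<in> {1..n}"
  shows "(\<Prod>k\<in>{1..n}-{i}. Y n z k) =
     (\<Prod>h=1..2^n-1. z h ^ (digit_sum n h - 1)) * (\<Prod>h=1..2^n-1. z h ^ (1 - eps i h))"
proof -
  have "(\<Prod>k\<in>{1..n}-{i}. Y n z k) = (\<Prod>h=1..2^n-1. \<Prod>k\<in>{1..n}-{i}. z h ^ eps k h)"
    unfolding Y_def by (rule prod.swap)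
  also have "\<dots> = (\<Prod>h=1..2^n-1. z h ^ (\<Sum>k\<in>{1..n}-{i}. eps k h))"
    by (rule prod.cong) (rule refl, rule power_sum[symmetric])
  also have "\<dots> = (\<Prod>h=1..2^n-1. z h ^ (digit_sum n h - 1) * z h ^ (1 - eps i h))"
  proof (rule prod.cong)
    fix h :: nat assume h: "h \<in> {1..2^n-1}"
    have d1: "digit_sum n h \<ge> 1" using digit_sum_ge1[OF h] .
    have "(\<Sum>k\<in>{1..n}-{i}. eps k h) = digit_sum n h - eps i h"
      unfolding digit_sum_def by (subst sum_diff1_nat) (use i in simp)
    also have "\<dots> = (digit_sum n h - 1) + (1 - eps i h)"
      using d1 eps_cases[of i h] by (elim disjE) simp_all
    finally show "z h ^ (\<Sum>k\<in>{1..n}-{i}. eps k h) = z h ^ (digit_sum n h - 1) * z h ^ (1 - eps i h)"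
      by (simp add: power_add)
  qed simp
  also have "\<dots> = (\<Prod>h=1..2^n-1. z h ^ (digit_sum n h - 1)) * (\<Prod>h=1..2^n-1. z h ^ (1 - eps i h))"
    by (rule prod.distrib)
  finally show ?thesis .
qed

lemma eq_equiv:
  assumes nz: "\<And>h. h \<in> {1..2^n-1} \<Longrightarrow> z h \<noteq> 0"
  shows "(\<Sum>i=1..n. (z (2^(i-1)) * x' i) * (\<Prod>k\<in>{1..n}-{i}. Y n z k)) =
    (\<Prod>h=1..2^n-1. z h ^ (digit_sum n h - 1)) *
    (\<Sum>j=1..n. (\<Prod>h=1..2^n-1. z h ^ (1 - eps j h)) * z (2^(j-1)) * x' j)"
  unfolding sum_distrib_left
proof (rule sum.cong)
  fix i assume i: "i \<in> {1..n}"
  show "z (2^(i-1)) * x' i * (\<Prod>k\<in>{1..n}-{i}. Y n z k) =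
    (\<Prod>h=1..2^n-1. z h ^ (digit_sum n h - 1)) * ((\<Prod>h=1..2^n-1. z h ^ (1 - eps i h)) * z (2^(i-1)) * x' i)"
  proof -
    have ac: "\<And>a b c (d::int) e. a * b * (c * d) = c * (d * a * b)" by (simp add: ac_simps)
    have Yp: "(\<Prod>k\<in>{1..n}-{i}. Y n z k) =
     (\<Prod>h=1..2^n-1. z h ^ (digit_sum n h - 1)) * (\<Prod>h=1..2^n-1. z h ^ (1 - eps i h))"
      by (rule Y_prod_diff) (use nz i in auto)
    show ?thesis unfolding Yp by (rule ac)
  qed
qed simp



lemma div_lemma:
  fixes x y :: "nat \<Rightarrow> int"
  assumes n2: "2 \<le> n" and nz: "\<And>k. k \<in> {1..n} \<Longrightarrow> y k \<noteq> 0"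
    and eq: "(\<Sum>i=1..n. x i * (\<Prod>k\<in>{1..n}-{i}. y k)) = 0"
    and j: "j \<in> {1..n}" and q: "prime q" and xj: "x j \<noteq> 0"
  shows "\<exists>i\<in>{1..n}. i \<noteq> j \<and> multiplicity q (y j) - multiplicity q (y i) \<le> multiplicity q (x j)"
proof -
  define v where "v k = multiplicity q (y k)" for k
  define J where "J = {1..n} - {j}"
  have Jfin: "finite J" unfolding J_def by simp
  have Jne: "J \<noteq> {}"
  proof (cases "j = 1")
    case True hence "2 \<in> J" using n2 by (simp add: J_def)
    thus ?thesis by blast
  next
    case False hence "1 \<in> J" using n2 j by (simp add: J_def)
    thus ?thesis by blast
  qed
  define M where "M = Max (v ` J)"
  have "M \<in> v ` J" unfolding M_def using Jfin Jne by simp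
  then obtain i where i: "i \<in> J" "v i = M" by auto
  have vM: "v k \<le> M" if "k \<in> J" for k unfolding M_def using Jfin that by simp
  define P where "P k = (\<Prod>l\<in>{1..n}-{k}. y l)" for k
  have Pnz: "P k \<noteq> 0" for k unfolding P_def using nz by (simp add: prod_zero_iff)
  have multP: "multiplicity q (P k) = (\<Sum>l\<in>{1..n}-{k}. v l)" for k
    unfolding P_def v_def by (rule prime_elem_multiplicity_prod_distrib) (use q nz in auto)
  define S where "S = (\<Sum>l\<in>J. v l)"
  have tot: "(\<Sum>l\<in>{1..n}-{k}. v l) + v k = (\<Sum>l=1..n. v l)" if "k \<in> {1..n}" for k
    using sum.remove[of "{1..n}" k v] that by simp
  have MS: "M \<le> S" unfolding S_def using i Jfin by (metis member_le_sum zero_le)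
  define E where "E = S + v j - M"
  have key: "E \<le> multiplicity q (P k)" if k: "k \<in> J" for k
  proof -
    have "k \<in> {1..n}" using k by (simp add: J_def)
    from tot[OF this] tot[OF j] vM[OF k] show ?thesis
      unfolding E_def S_def J_def multP by linarith
  qed
  have dv: "q ^ E dvd x k * P k" if "k \<in> J" for k
    using multiplicity_dvd'[OF key[OF that]] by (rule dvd_mult)
  have "x j * P j + (\<Sum>k\<in>J. x k * P k) = 0"
    using eq sum.remove[of "{1..n}" j "\<lambda>i. x i * P i"] j unfolding P_def J_def by simp
  hence "x j * P j = - (\<Sum>k\<in>J. x k * P k)" by linarith
  moreover have "q ^ E dvd (\<Sum>k\<in>J. x k * P k)" using dv by (rule dvd_sum)
  ultimately have "q ^ E dvd x j * P j" by simp
  moreover have nu: "\<not> is_unit q" using q not_prime_unit by blast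
  ultimately have "E \<le> multiplicity q (x j * P j)"
    using multiplicity_geI[of "x j * P j" q E] xj Pnz by simp
  also have "\<dots> = multiplicity q (x j) + multiplicity q (P j)"
    by (rule prime_elem_multiplicity_mult_distrib[OF prime_imp_prime_elem[OF q] xj Pnz])
  also have "\<dots> = multiplicity q (x j) + S" using multP[of j] by (simp add: S_def J_def)
  finally have "v j - M \<le> multiplicity q (x j)" unfolding E_def using MS by linarith
  thus ?thesis using i unfolding J_def v_def by auto
qed

lemma the_map_eq: "the_map n (x', z) = ((\<lambda>j\<in>{1..n}. z (2^(j-1)) * x' j), (\<lambda>j\<in>{1..n}. Y n z j))"
  unfolding the_map_def Y_def by simp

lemma A_props:
  assumes "(x', z) \<in> A_set n"
  shows "x' \<in> {1..n} \<rightarrow>\<^sub>E UNIV" "z \<in> {1..2^n-1} \<rightarrow>\<^sub>E (UNIV - {0})"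
    "\<And>h. h \<in> {1..2^n-1} \<Longrightarrow> z h \<noteq> 0" "reduced (2^n-1) z"
    "\<And>h. h \<in> {1..2^n-1} \<Longrightarrow> digit_sum n h \<ge> 2 \<Longrightarrow> z h > 0"
    "(\<Sum>j=1..n. (\<Prod>h=1..2^n-1. z h ^ (1 - eps j h)) * z (2^(j-1)) * x' j) = 0"
  using assms unfolding A_set_def by (auto simp: PiE_iff)

lemma forward:
  assumes a: "(x', z) \<in> A_set n"
  shows "the_map n (x', z) \<in> W_set n"
proof -
  note A = A_props[OF a]
  have "(\<Sum>i=1..n. (\<lambda>j\<in>{1..n}. z (2^(j-1)) * x' j) i * (\<Prod>k\<in>{1..n}-{i}. (\<lambda>j\<in>{1..n}. Y n z j) k))
      = (\<Sum>i=1..n. (z (2^(i-1)) * x' i) * (\<Prod>k\<in>{1..n}-{i}. Y n z k))"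
    by (rule sum.cong) simp_all
  also have "\<dots> = (\<Prod>h=1..2^n-1. z h ^ (digit_sum n h - 1)) *
    (\<Sum>j=1..n. (\<Prod>h=1..2^n-1. z h ^ (1 - eps j h)) * z (2^(j-1)) * x' j)"
    by (rule eq_equiv) (use A(3) in auto)
  also have "\<dots> = 0" unfolding A(6) by simp
  finally have s: "(\<Sum>i=1..n. (\<lambda>j\<in>{1..n}. z (2^(j-1)) * x' j) i * (\<Prod>k\<in>{1..n}-{i}. (\<lambda>j\<in>{1..n}. Y n z j) k)) = 0" .
  have p: "(\<Prod>i=1..n. (\<lambda>j\<in>{1..n}. Y n z j) i) \<noteq> 0"
    using Y_nz[of n z, OF A(3)] by (simp add: prod_zero_iff)
  show ?thesis unfolding the_map_eq W_set_def using s p by simp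
qed



lemma int_eq_sgn_abs: "sgn (a::int) = sgn b \<Longrightarrow> \<bar>a\<bar> = \<bar>b\<bar> \<Longrightarrow> a = b"
  by (metis sgn_mult_abs)

lemma inj_part:
  assumes a: "(x', z) \<in> A_set n" and b: "(x'', w) \<in> A_set n"
    and e: "the_map n (x', z) = the_map n (x'', w)"
  shows "(x', z) = (x'', w)"
proof -
  note A = A_props[OF a] and B = A_props[OF b]
  from e have e1: "(\<lambda>j\<in>{1..n}. z (2^(j-1)) * x' j) = (\<lambda>j\<in>{1..n}. w (2^(j-1)) * x'' j)"
    and e2: "(\<lambda>j\<in>{1..n}. Y n z j) = (\<lambda>j\<in>{1..n}. Y n w j)"
    unfolding the_map_eq by auto
  have Yeq: "Y n z j = Y n w j" if "j \<in> {1..n}" for j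
    using fun_cong[OF e2, of j] that by simp
  have zw: "z h = w h" if h: "h \<in> {1..2^n-1}" for h
  proof -
    have m: "multiplicity q (z h) = multiplicity q (w h)" if q: "prime q" for q
    proof (rule chain_unique[of n "\<lambda>h. multiplicity q (z h)" "\<lambda>h. multiplicity q (w h)" "\<lambda>j. multiplicity q (Y n z j)"])
      show "vchain n (\<lambda>h. multiplicity q (z h))" by (rule chain_of_reduced) (use A q in auto)
      show "vchain n (\<lambda>h. multiplicity q (w h))" by (rule chain_of_reduced) (use B q in auto)
      show "multiplicity q (Y n z j) = (\<Sum>l = 1..2 ^ n - 1. eps j l * multiplicity q (z l))"
        if "j \<in> {1..n}" for j
        by (rule mult_Y) (use A q in auto)
      show "multiplicity q (Y n z j) = (\<Sum>l = 1..2 ^ n - 1. eps j l * multiplicity q (w l))"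
        if "j \<in> {1..n}" for j
        unfolding Yeq[OF that] by (rule mult_Y) (use B q in auto)
    qed (rule h)
    have "normalize (z h) = normalize (w h)"
      by (rule multiplicity_eq_imp_eq) (use A(3) B(3) h m in auto)
    hence ab: "\<bar>z h\<bar> = \<bar>w h\<bar>" by simp
    show ?thesis
    proof (cases "digit_sum n h \<ge> 2")
      case True
      then show ?thesis using A(5) B(5) h ab by force
    next
      case False
      obtain j where j: "j \<in> {1..n}" "eps j h = 1" using nonempty_bit[OF h] by blast
      have hj: "h = 2^(j-1)" using digit_sum_ge2[OF h j] False by force
      have "sgn (z h) = sgn (Y n z j)" unfolding hj by (rule sgn_Y[symmetric]) (use A j in auto)
      also have "\<dots> = sgn (Y n w j)" using Yeq[OF j(1)] by simp
      also have "\<dots> = sgn (w h)" unfolding hj by (rule sgn_Y) (use B j in auto)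
      finally show ?thesis using ab by (rule int_eq_sgn_abs)
    qed
  qed
  have z: "z = w" by (rule PiE_ext[OF A(2) B(2)]) (rule zw)
  have "x' = x''"
  proof (rule PiE_ext[OF A(1) B(1)])
    fix j assume j: "j \<in> {1..n}"
    have "z (2^(j-1)) * x' j = w (2^(j-1)) * x'' j" using fun_cong[OF e1, of j] j by simp
    moreover have "z (2^(j-1)) \<noteq> 0" using A(3) pow_in[OF j] by auto
    ultimately show "x' j = x'' j" unfolding z by simp
  qed
  with z show ?thesis by simp
qed



lemma surj_part:
  assumes n3: "n \<ge> 3" and xy: "(x, y) \<in> W_set n"
  shows "\<exists>a\<in>A_set n. the_map n a = (x, y)"
proof -
  have xE: "x \<in> {1..n} \<rightarrow>\<^sub>E UNIV" and yE: "y \<in> {1..n} \<rightarrow>\<^sub>E UNIV"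
    and py: "(\<Prod>i=1..n. y i) \<noteq> 0"
    and eq: "(\<Sum>i=1..n. x i * (\<Prod>j\<in>{1..n} - {i}. y j)) = 0"
    using xy unfolding W_set_def by auto
  have ynz: "y k \<noteq> 0" if "k \<in> {1..n}" for k using py that by (simp add: prod_zero_iff)
  define v where "v q k = multiplicity q (y k)" for q k
  define P where "P = prime_factors (\<Prod>k=1..n. y k)"
  define m where "m h = (\<Prod>q\<in>P. q ^ Aq n (v q) h)" for h
  define s where "s h = (\<Prod>k::nat=1..n. if h = 2^(k-1) then sgn (y k) else (1::int))" for h :: nat
  define z where "z = (\<lambda>h::nat\<in>{1..2^n-1}. s h * m h)"
  define x' where "x' = (\<lambda>j\<in>{1..n}. x j div z (2^(j-1)))"
  have Pfin: "finite P" unfolding P_def by simp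
  have Pprime: "prime q" if "q \<in> P" for q using that unfolding P_def by (rule in_prime_factors_imp_prime)
  have mpos: "m h > 0" for h
    unfolding m_def by (rule prod_pos) (use Pprime prime_gt_0_int in auto)
  have sabs: "\<bar>s h\<bar> = 1" for h
    unfolding s_def abs_prod by (rule prod.neutral) (use ynz in auto)
  have s_other: "s h = 1" if "\<And>k. k \<in> {1..n} \<Longrightarrow> h \<noteq> 2^(k-1)" for h
    unfolding s_def by (rule prod.neutral) (use that in auto)
  have s_pow: "s (2^(j-1)) = sgn (y j)" if j: "j \<in> {1..n}" for j
  proof -
    have "s (2^(j-1)) = (\<Prod>k=1..n. if k = j then sgn (y k) else 1)"
      unfolding s_def
    proof (rule prod.cong)
      fix k assume k: "k \<in> {1..n}"
      have "((2::nat)^(j-1) = 2^(k-1)) = (j - 1 = k - 1)" by (rule power_inject_exp) simp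
      also have "\<dots> = (k = j)" using j k by auto
      finally show "(if (2::nat)^(j-1) = 2^(k-1) then sgn (y k) else 1) = (if k = j then sgn (y k) else 1)"
        by simp
    qed simp
    also have "\<dots> = sgn (y j)" using j by (simp add: prod.delta)
    finally show ?thesis .
  qed
  have zval: "z h = s h * m h" if "h \<in> {1..2^n-1}" for h using that by (simp add: z_def)
  have znz: "z h \<noteq> 0" if "h \<in> {1..2^n-1}" for h
    using zval[OF that] sabs[of h] mpos[of h] by auto
  have zabs: "\<bar>z h\<bar> = m h" if "h \<in> {1..2^n-1}" for h
    using zval[OF that] sabs[of h] mpos[of h] by (simp add: abs_mult)
  have zpos: "z h > 0" if h: "h \<in> {1..2^n-1}" and d: "digit_sum n h \<ge> 2" for h
  proof -
    have "s h = 1"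
    proof (rule s_other)
      fix k assume "k \<in> {1..n}" thus "h \<noteq> 2^(k-1)" using digit_sum_pow[of k n] d by auto
    qed
    thus ?thesis using zval[OF h] mpos[of h] by simp
  qed
  have multz: "multiplicity q (z h) = Aq n (v q) h" if q: "prime q" and h: "h \<in> {1..2^n-1}" for q h
  proof -
    have "multiplicity q (z h) = multiplicity q (normalize (z h))" by (rule multiplicity_normalize_right[symmetric])
    also have "normalize (z h) = m h" using zabs[OF h] by simp
    also have "multiplicity q (m h) = (\<Sum>p\<in>P. multiplicity q (p ^ Aq n (v p) h))"
      unfolding m_def by (rule prime_elem_multiplicity_prod_distrib) (use q Pfin Pprime[of 0] in auto)
    also have "\<dots> = (\<Sum>p\<in>P. if p = q then Aq n (v q) h else 0)"
    proof (rule sum.cong)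
      fix p assume p: "p \<in> P"
      show "multiplicity q (p ^ Aq n (v p) h) = (if p = q then Aq n (v q) h else 0)"
        using multiplicity_distinct_prime_power[of q p] Pprime[OF p] q by auto
    qed simp
    also have "\<dots> = (if q \<in> P then Aq n (v q) h else 0)" using Pfin by (simp add: sum.delta')
    also have "\<dots> = Aq n (v q) h"
    proof (cases "q \<in> P")
      case False
      have "v q k = 0" if k: "k \<in> {1..n}" for k
      proof -
        have "\<not> q dvd y k"
        proof
          assume "q dvd y k"
          hence "q dvd (\<Prod>k=1..n. y k)" using k by (meson dvd_prodI finite_atLeastAtMost dvd_trans)
          hence "q \<in> P" unfolding P_def using q py by (simp add: in_prime_factors_iff)
          thus False using False by simp
        qed
        thus ?thesis unfolding v_def by (rule not_dvd_imp_multiplicity_0)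
      qed
      hence "(\<Sum>k=1..n. v q k) = 0" by simp
      thus ?thesis using False unfolding Aq_def by simp
    qed simp
    finally show ?thesis .
  qed
  have Yz: "Y n z j = y j" if j: "j \<in> {1..n}" for j
  proof -
    have "normalize (Y n z j) = normalize (y j)"
    proof (rule multiplicity_eq_imp_eq)
      show "Y n z j \<noteq> 0" by (rule Y_nz) (use znz in auto)
      show "y j \<noteq> 0" using ynz[OF j] .
      fix q :: int assume q: "prime q"
      have "multiplicity q (Y n z j) = (\<Sum>h=1..2^n-1. eps j h * multiplicity q (z h))"
        by (rule mult_Y) (use q znz in auto)
      also have "\<dots> = (\<Sum>h=1..2^n-1. eps j h * Aq n (v q) h)"
        by (rule sum.cong) (use multz q in auto)
      also have "\<dots> = v q j" by (rule Aq_rep[OF j])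
      finally show "multiplicity q (Y n z j) = multiplicity q (y j)" by (simp add: v_def)
    qed
    hence ab: "\<bar>Y n z j\<bar> = \<bar>y j\<bar>" by simp
    have "sgn (Y n z j) = sgn (z (2^(j-1)))" by (rule sgn_Y) (use znz zpos j in auto)
    also have "\<dots> = sgn (s (2^(j-1)) * m (2^(j-1)))" using zval[OF pow_in[OF j]] by simp
    also have "\<dots> = sgn (y j)" using s_pow[OF j] mpos[of "2^(j-1)"] by (simp add: sgn_mult)
    finally show ?thesis using ab by (rule int_eq_sgn_abs)
  qed
  have red: "reduced (2^n-1) z"
    unfolding reduced_def
  proof (intro ballI impI)
    fix h l assume h: "h \<in> {1..2^n-1}" and l: "l \<in> {1..2^n-1}" and nc: "\<not> preceq h l \<and> \<not> preceq l h"
    show "gcd (z h) (z l) = 1"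
    proof (rule ccontr)
      assume g1: "gcd (z h) (z l) \<noteq> 1"
      have g0: "gcd (z h) (z l) \<noteq> 0" using znz[OF h] by simp
      have "\<not> is_unit (gcd (z h) (z l))" using g1 by simp
      then obtain q where q: "prime q" "q dvd gcd (z h) (z l)" using prime_divisor_exists[OF g0] by blast
      have nu: "\<not> is_unit q" using q(1) not_prime_unit by blast
      have "q ^ 1 dvd z h" "q ^ 1 dvd z l" using q(2) by auto
      hence "multiplicity q (z h) \<ge> 1" "multiplicity q (z l) \<ge> 1"
        using multiplicity_geI[OF znz[OF h] nu] multiplicity_geI[OF znz[OF l] nu] by auto
      hence "Aq n (v q) h > 0" "Aq n (v q) l > 0" using multz[OF q(1) h] multz[OF q(1) l] by auto
      hence "preceq h l \<or> preceq l h" using Aq_chain[of n "v q"] h l unfolding vchain_def by blast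
      thus False using nc by blast
    qed
  qed
  have zdvd: "z (2^(j-1)) dvd x j" if j: "j \<in> {1..n}" for j
  proof (cases "x j = 0")
    case True thus ?thesis by simp
  next
    case False
    show ?thesis
    proof (rule multiplicity_le_imp_dvd)
      show "z (2^(j-1)) \<noteq> 0" using znz[OF pow_in[OF j]] .
      fix q :: int assume q: "prime q"
      obtain i where i: "i \<in> {1..n}" "i \<noteq> j"
        "multiplicity q (y j) - multiplicity q (y i) \<le> multiplicity q (x j)"
        using div_lemma[of n y x j q] n3 ynz eq j q False by auto
      have "multiplicity q (z (2^(j-1))) = Aq n (v q) (2^(j-1))" by (rule multz[OF q pow_in[OF j]])
      also have "\<dots> \<le> v q j - v q i" by (rule Aq_single[OF j i(1,2)])
      also have "\<dots> \<le> multiplicity q (x j)" using i(3) by (simp add: v_def)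
      finally show "multiplicity q (z (2^(j-1))) \<le> multiplicity q (x j)" .
    qed
  qed
  have map: "the_map n (x', z) = (x, y)"
  proof -
    have "(\<lambda>j\<in>{1..n}. z (2^(j-1)) * x' j) = x"
    proof (rule PiE_ext[OF _ xE])
      show "(\<lambda>j\<in>{1..n}. z (2^(j-1)) * x' j) \<in> {1..n} \<rightarrow>\<^sub>E UNIV" by simp
      fix j assume j: "j \<in> {1..n}"
      show "(\<lambda>j\<in>{1..n}. z (2^(j-1)) * x' j) j = x j"
        using j zdvd[OF j] by (simp add: x'_def)
    qed
    moreover have "(\<lambda>j\<in>{1..n}. Y n z j) = y"
    proof (rule PiE_ext[OF _ yE])
      show "(\<lambda>j\<in>{1..n}. Y n z j) \<in> {1..n} \<rightarrow>\<^sub>E UNIV" by simp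
      fix j assume j: "j \<in> {1..n}"
      show "(\<lambda>j\<in>{1..n}. Y n z j) j = y j" using j Yz[OF j] by simp
    qed
    ultimately show ?thesis unfolding the_map_eq by simp
  qed
  have Aeq: "(\<Sum>j=1..n. (\<Prod>h=1..2^n-1. z h ^ (1 - eps j h)) * z (2^(j-1)) * x' j) = 0"
  proof -
    have C: "(\<Prod>h=1..2^n-1. z h ^ (digit_sum n h - 1)) \<noteq> 0"
      using znz by (simp add: prod_zero_iff)
    have "(\<Prod>h=1..2^n-1. z h ^ (digit_sum n h - 1)) *
      (\<Sum>j=1..n. (\<Prod>h=1..2^n-1. z h ^ (1 - eps j h)) * z (2^(j-1)) * x' j)
      = (\<Sum>i=1..n. (z (2^(i-1)) * x' i) * (\<Prod>k\<in>{1..n}-{i}. Y n z k))"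
      by (rule eq_equiv[symmetric]) (use znz in auto)
    also have "\<dots> = (\<Sum>i=1..n. x i * (\<Prod>k\<in>{1..n}-{i}. y k))"
    proof (rule sum.cong)
      fix i assume i: "i \<in> {1..n}"
      have "z (2^(i-1)) * x' i = x i" using i zdvd[OF i] by (simp add: x'_def)
      moreover have "(\<Prod>k\<in>{1..n}-{i}. Y n z k) = (\<Prod>k\<in>{1..n}-{i}. y k)"
        by (rule prod.cong) (use Yz in auto)
      ultimately show "(z (2^(i-1)) * x' i) * (\<Prod>k\<in>{1..n}-{i}. Y n z k) = x i * (\<Prod>k\<in>{1..n}-{i}. y k)"
        by simp
    qed simp
    also have "\<dots> = 0" by (rule eq)
    finally show ?thesis using C unfolding mult_eq_0_iff by blast
  qed
  have "(x', z) \<in> A_set n"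
    unfolding A_set_def
  proof (simp only: mem_Collect_eq case_prod_conv, intro conjI)
    show "x' \<in> {1..n} \<rightarrow>\<^sub>E UNIV" by (simp add: x'_def)
    show "z \<in> {1..2^n-1} \<rightarrow>\<^sub>E (UNIV - {0})"
      unfolding z_def restrict_PiE_iff using zval znz by auto
    show "reduced (2^n-1) z" by (rule red)
    show "\<forall>h\<in>{1..2^n-1}. 2 \<le> digit_sum n h \<longrightarrow> 0 < z h" using zpos by blast
    show "(\<Sum>j=1..n. (\<Prod>h=1..2^n-1. z h ^ (1 - eps j h)) * z (2^(j-1)) * x' j) = 0" by (rule Aeq)
  qed
  with map show ?thesis by blast
qed

theorem mainTheorem11:
  fixes n :: nat
  assumes "n \<ge> 3"
  shows "bij_betw (the_map n) (A_set n) (W_set n)"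
  unfolding bij_betw_def
proof
  show "inj_on (the_map n) (A_set n)"
  proof (rule inj_onI)
    fix a b assume "a \<in> A_set n" "b \<in> A_set n" "the_map n a = the_map n b"
    thus "a = b" using inj_part by (cases a, cases b) blast
  qed
  show "the_map n ` A_set n = W_set n"
  proof
    show "the_map n ` A_set n \<subseteq> W_set n" using forward by auto
    show "W_set n \<subseteq> the_map n ` A_set n"
    proof
      fix w assume "w \<in> W_set n"
      then obtain x y where "w = (x, y)" "(x, y) \<in> W_set n" by (cases w) auto
      thus "w \<in> the_map n ` A_set n" using surj_part[OF assms] by force
    qed
  qed
qed

end
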